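(* Fix $n\in\mathbb{N}$ and $\delta\in\mathbb{R}$. For $\mu\in\mathbb{N}=\{1,2,\dots\}$ let $S_\mu$ be the set of pairs $(p,z)\in\mathbb{R}^n\times\mathbb{R}^n$ with $\delta>-\min_{i,j}\{p_i,z_j\}$ such that $(p+\delta)^{\mu}\succ_w (z+\delta)^{\mu}$ and $\sum_{i=1}^n (p_i+\delta)^k\geq\sum_{i=1}^n (z_i+\delta)^k$ for all $k\in\{1,\dots,\mu-1\}$. If $\mu_2>\mu_1$, then $S_{\mu_1}\subseteq S_{\mu_2}$. Consequently, increasing $\mu$ enlarges the set of rational functions $H(s)=K\prod_{i=1}^n(s-z_i)/\prod_{i=1}^n(s-p_i)$, $K>0$, with real zeros and poles that are certified logarithmically completely monotonic by the condition $(p,z)\in S_\mu$.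
   Context: $(x+\delta)^\mu$ denotes the vector with components $(x_i+\delta)^\mu$. For $x\in\mathbb{R}^n$, $x^{\downarrow}$ is the vector of its components sorted in descending order; $x\succ_w y$ means $\sum_{i=1}^k x^{\downarrow}_i\geq\sum_{i=1}^k y^{\downarrow}_i$ for all $k=1,\dots,n$. (The condition $(p,z)\in S_\mu$ for some $\mu,\delta$ is a sufficient condition for $H$ to be logarithmically completely monotonic.) *)

theory Defs
  imports Complex_Main
begin

text \<open>Vectors of R^n are represented as real lists of length n.
  The decreasing rearrangement x\<down> is rev (sort x).\<close>

definition decr :: "real list \<Rightarrow> real list" where
  "decr x = rev (sort x)"

definition weak_maj :: "real list \<Rightarrow> real list \<Rightarrow> bool" where
  "weak_maj x y \<longleftrightarrow> length x = length y \<and>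
     (\<forall>k\<in>{1..length x}. sum_list (take k (decr x)) \<ge> sum_list (take k (decr y)))"

definition shiftpow :: "real \<Rightarrow> nat \<Rightarrow> real list \<Rightarrow> real list" where
  "shiftpow \<delta> \<mu> x = map (\<lambda>t. (t + \<delta>) ^ \<mu>) x"

text \<open>The set S_\<mu>. The condition \<delta> > - min_{i,j} {p_i, z_j} is written out as:
  \<delta> > - x for every component x of p and of z.\<close>
definition S_set :: "nat \<Rightarrow> real \<Rightarrow> nat \<Rightarrow> (real list \<times> real list) set" where
  "S_set n \<delta> \<mu> = {(p, z). length p = n \<and> length z = n \<and>
      (\<forall>x \<in> set p \<union> set z. \<delta> > - x) \<and>
      weak_maj (shiftpow \<delta> \<mu> p) (shiftpow \<delta> \<mu> z) \<and>
      (\<forall>k\<in>{1..<\<mu>}. sum_list (shiftpow \<delta> k p) \<ge> sum_list (shiftpow \<delta> k z))}"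

end

theory Submission imports Defs "HOL-Analysis.Analysis" "HOL-Library.Multiset" begin

lemma abel_nonneg:
  fixes c d :: "nat \<Rightarrow> real"
  assumes D: "\<forall>j\<le>n. 0 \<le> (\<Sum>i<j. d i)"
    and C0: "\<forall>i<n. d i \<noteq> 0 \<longrightarrow> 0 \<le> c i"
    and Cm: "\<forall>i j. i < j \<longrightarrow> j < n \<longrightarrow> d i \<noteq> 0 \<longrightarrow> d j \<noteq> 0 \<longrightarrow> c j \<le> c i"
  shows "k \<le> n \<Longrightarrow> 0 \<le> l \<Longrightarrow> (\<forall>i<k. d i \<noteq> 0 \<longrightarrow> l \<le> c i) \<Longrightarrow> l * (\<Sum>i<k. d i) \<le> (\<Sum>i<k. c i * d i)"
proof (induction k arbitrary: l)
  case 0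
  then show ?case by simp
next
  case (Suc k)
  show ?case
  proof (cases "d k = 0")
    case True
    then show ?thesis using Suc by simp
  next
    case False
    have ih: "c k * (\<Sum>i<k. d i) \<le> (\<Sum>i<k. c i * d i)"
      using Suc.prems Suc.IH[of "c k"] C0 Cm False by auto
    have "l * (\<Sum>i<Suc k. d i) \<le> c k * (\<Sum>i<Suc k. d i)"
      using Suc.prems False D by (intro mult_right_mono) auto
    also have "\<dots> = c k * (\<Sum>i<k. d i) + c k * d k" by (simp add: algebra_simps)
    also have "\<dots> \<le> (\<Sum>i<Suc k. c i * d i)" using ih by simp
    finally show ?thesis .
  qed
qed

lemma slope_mono:
  fixes f :: "real \<Rightarrow> real"
  assumes f: "convex_on I f" and I: "X \<in> I" "X' \<in> I" "V \<in> I"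
    and le: "X' \<le> X" and ne: "X \<noteq> V" "X' \<noteq> V"
  shows "(f X' - f V) / (X' - V) \<le> (f X - f V) / (X - V)"
proof -
  have sym: "\<And>a b. (f a - f b) / (a - b) = (f b - f a) / (b - a)"
    by (simp add: divide_simps) (auto simp: algebra_simps)
  consider "X' = X" | "V < X'" "X' < X" | "X' < X" "X < V" | "X' < V" "V < X"
    using le ne by linarith
  then show ?thesis
  proof cases
    case 1 then show ?thesis by simp
  next
    case 2
    from convex_on_slope_le(1)[OF f I(3) I(1) 2] show ?thesis by (simp add: sym)
  next
    case 3
    from convex_on_slope_le(2)[OF f I(2) I(3) 3] show ?thesis by (simp add: sym)
  next
    case 4
    from convex_on_slope_le[OF f I(2) I(1) 4] show ?thesis by (metis sym order_trans)
  qed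
qed

lemma Q_mono:
  fixes u v u' v' :: real and mu m :: nat
  assumes pos: "u > 0" "v > 0" "u' > 0" "v' > 0" and le: "u' \<le> u" "v' \<le> v"
    and mu: "mu \<ge> 1" "m \<ge> mu" and ne: "u \<noteq> v" "u' \<noteq> v'"
  shows "(u'^m - v'^m) / (u'^mu - v'^mu) \<le> (u^m - v^m) / (u^mu - v^mu)"
proof -
  define f where "f = (\<lambda>t::real. t powr (real m / real mu))"
  have cv: "convex_on {0<..} f" unfolding f_def by (rule powr_convex) (use mu in auto)
  have fe: "f (t ^ mu) = t ^ m" if "t > 0" for t
    using that mu by (simp add: f_def powr_realpow[symmetric] powr_powr)
  have inj: "a ^ mu = b ^ mu \<longleftrightarrow> a = b" if "a > 0" "b > 0" for a b :: real
    using that mu by (intro power_eq_iff_eq_base) auto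
  have mo: "a ^ mu \<le> b ^ mu" if "a \<le> b" "a > 0" for a b :: real
    using that by (simp add: power_mono)
  define s where "s = (\<lambda>a b. (f a - f b) / (a - b))"
  have s_sym: "s a b = s b a" for a b
    unfolding s_def by (simp add: divide_simps) (auto simp: algebra_simps)
  have key: "s X' V \<le> s X V" if "X > 0" "X' > 0" "V > 0" "X' \<le> X" "X \<noteq> V" "X' \<noteq> V" for X X' V
    unfolding s_def using slope_mono[OF cv, of X X' V] that by auto
  have eq: "(a^m - b^m) / (a^mu - b^mu) = s (a^mu) (b^mu)" if "a > 0" "b > 0" for a b :: real
    unfolding s_def using fe that by simp
  have ps: "\<And>t::real. t > 0 \<Longrightarrow> t ^ mu > 0" by simp
  show ?thesis
  proof (cases "u' = v")
    case True
    then have "u \<noteq> v'" using le ne by auto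
    have "s (u'^mu) (v'^mu) \<le> s (u^mu) (v'^mu)"
      using key[of "u^mu" "u'^mu" "v'^mu"] pos le ne inj mo \<open>u \<noteq> v'\<close> by auto
    also have "\<dots> = s (v'^mu) (u^mu)" by (rule s_sym)
    also have "\<dots> \<le> s (v^mu) (u^mu)"
      using key[of "v^mu" "v'^mu" "u^mu"] pos le ne inj mo \<open>u \<noteq> v'\<close> by auto
    also have "\<dots> = s (u^mu) (v^mu)" by (rule s_sym)
    finally show ?thesis using eq pos by simp
  next
    case False
    have "s (u'^mu) (v'^mu) = s (v'^mu) (u'^mu)" by (rule s_sym)
    also have "\<dots> \<le> s (v^mu) (u'^mu)"
      using key[of "v^mu" "v'^mu" "u'^mu"] pos le ne inj mo False by auto
    also have "\<dots> = s (u'^mu) (v^mu)" by (rule s_sym)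
    also have "\<dots> \<le> s (u^mu) (v^mu)"
      using key[of "u^mu" "u'^mu" "v^mu"] pos le ne inj mo False by auto
    finally show ?thesis using eq pos by simp
  qed
qed


lemma core:
  fixes x y :: "nat \<Rightarrow> real" and mu m :: nat
  assumes pos: "\<forall>i<n. x i > 0 \<and> y i > 0"
    and anti: "\<forall>i j. i \<le> j \<longrightarrow> j < n \<longrightarrow> x j \<le> x i \<and> y j \<le> y i"
    and mu: "mu \<ge> 1" "m \<ge> mu"
    and H: "\<forall>j\<le>n. (\<Sum>i<j. y i ^ mu) \<le> (\<Sum>i<j. x i ^ mu)"
    and j: "j \<le> n"
  shows "(\<Sum>i<j. y i ^ m) \<le> (\<Sum>i<j. x i ^ m)"
proof -
  define d where "d = (\<lambda>i. x i ^ mu - y i ^ mu)"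
  define c where "c = (\<lambda>i. (x i ^ m - y i ^ m) / d i)"
  have fact: "x i ^ m - y i ^ m = c i * d i" if "i < n" for i
  proof (cases "d i = 0")
    case True
    then have "x i ^ mu = y i ^ mu" unfolding d_def by simp
    then have "x i = y i" using power_eq_iff_eq_base[of mu "x i" "y i"] pos that mu by auto
    then show ?thesis using True by simp
  next
    case False then show ?thesis unfolding c_def by simp
  qed
  have D: "\<forall>j\<le>n. 0 \<le> (\<Sum>i<j. d i)"
    using H unfolding d_def by (simp add: sum_subtractf)
  have C0: "\<forall>i<n. d i \<noteq> 0 \<longrightarrow> 0 \<le> c i"
  proof (intro allI impI)
    fix i assume i: "i < n" "d i \<noteq> 0"
    have xp: "x i > 0" "y i > 0" using pos i by auto
    show "0 \<le> c i"
    proof (cases "y i < x i")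
      case True
      have "y i ^ m < x i ^ m" "y i ^ mu < x i ^ mu"
        using True xp mu by (auto intro!: power_strict_mono)
      then show ?thesis unfolding c_def d_def by simp
    next
      case False
      then have F: "x i < y i" using i unfolding d_def by (metis eq_iff_diff_eq_0 linorder_neqE_linordered_idom)
      have "x i ^ m < y i ^ m" "x i ^ mu < y i ^ mu"
        using F xp mu by (auto intro!: power_strict_mono)
      then show ?thesis unfolding c_def d_def by (simp add: zero_le_divide_iff)
    qed
  qed
  have Cm: "\<forall>i j. i < j \<longrightarrow> j < n \<longrightarrow> d i \<noteq> 0 \<longrightarrow> d j \<noteq> 0 \<longrightarrow> c j \<le> c i"
  proof (intro allI impI)
    fix i j assume ij: "i < j" "j < n" "d i \<noteq> 0" "d j \<noteq> 0"
    have "x i \<noteq> y i" "x j \<noteq> y j" using ij unfolding d_def by auto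
    then show "c j \<le> c i" unfolding c_def d_def
      using Q_mono[of "x i" "y i" "x j" "y j" mu m] pos anti ij mu by auto
  qed
  have "0 * (\<Sum>i<j. d i) \<le> (\<Sum>i<j. c i * d i)"
    using abel_nonneg[OF D C0 Cm, of j 0] j C0 by auto
  also have "\<dots> = (\<Sum>i<j. x i ^ m - y i ^ m)"
    using fact j by (intro sum.cong) auto
  finally show ?thesis by (simp add: sum_subtractf)
qed


lemma insort_map:
  assumes "\<forall>a\<in>set (x#ys). \<forall>b\<in>set (x#ys). a < b \<longrightarrow> f a < f b"
  shows "insort (f x) (map f ys) = map f (insort x ys)"
  using assms
proof (induction ys)
  case Nil then show ?case by simp
next
  case (Cons y ys)
  have "f x \<le> f y \<longleftrightarrow> x \<le> y"
  proof
    assume "f x \<le> f y"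
    then show "x \<le> y" using Cons.prems by (metis list.set_intros(1,2) linorder_not_le not_less)
  next
    assume "x \<le> y"
    then show "f x \<le> f y" using Cons.prems by (metis list.set_intros(1,2) order_le_less order_less_imp_le)
  qed
  moreover have "insort (f x) (map f ys) = map f (insort x ys)"
    using Cons by auto
  ultimately show ?case by simp
qed

lemma sort_map_strict:
  fixes f :: "real \<Rightarrow> real"
  shows "\<forall>a\<in>set xs. \<forall>b\<in>set xs. a < b \<longrightarrow> f a < f b \<Longrightarrow> sort (map f xs) = map f (sort xs)"
proof (induction xs)
  case Nil then show ?case by simp
next
  case (Cons x xs)
  then have "sort (map f xs) = map f (sort xs)" by auto
  moreover have "insort (f x) (map f (sort xs)) = map f (insort x (sort xs))"
    using Cons.prems by (intro insort_map) auto
  ultimately show ?case by simp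
qed

lemma decr_map:
  fixes f :: "real \<Rightarrow> real"
  shows "\<forall>a\<in>set xs. \<forall>b\<in>set xs. a < b \<longrightarrow> f a < f b \<Longrightarrow> decr (map f xs) = map f (decr xs)"
  unfolding decr_def by (simp add: sort_map_strict rev_map)

lemma sum_take:
  fixes xs :: "real list"
  assumes "j \<le> length xs"
  shows "sum_list (take j xs) = (\<Sum>i<j. xs ! i)"
  using assms by (simp add: sum_list_sum_nth min_def atLeast0LessThan)

lemma sum_decr: "sum_list (decr xs) = sum_list (xs :: real list)"
  unfolding decr_def by (metis mset_rev mset_sort sum_mset_sum_list)

lemma decr_anti:
  fixes xs :: "real list"
  assumes "i \<le> j" "j < length xs"
  shows "decr xs ! j \<le> decr xs ! i"
proof -
  have "decr xs ! j = sort xs ! (length xs - Suc j)" "decr xs ! i = sort xs ! (length xs - Suc i)"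
    using assms unfolding decr_def by (auto simp: rev_nth)
  then show ?thesis using assms by (simp add: sorted_nth_mono)
qed

lemma decr_mem: "i < length xs \<Longrightarrow> decr xs ! i \<in> set xs"
  unfolding decr_def by (metis length_rev length_sort nth_mem set_rev set_sort)

lemma length_decr[simp]: "length (decr xs) = length xs"
  unfolding decr_def by simp

theorem proposition4:
  fixes n :: nat and \<delta> :: real and \<mu>1 \<mu>2 :: nat
  assumes "\<mu>1 \<ge> 1" and "\<mu>2 > \<mu>1"
  shows "S_set n \<delta> \<mu>1 \<subseteq> S_set n \<delta> \<mu>2"
proof
  fix q assume "q \<in> S_set n \<delta> \<mu>1"
  then obtain p z where q: "q = (p, z)" and lp: "length p = n" and lz: "length z = n"
    and ps: "\<forall>x \<in> set p \<union> set z. \<delta> > - x"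
    and wm: "weak_maj (shiftpow \<delta> \<mu>1 p) (shiftpow \<delta> \<mu>1 z)"
    and sm: "\<forall>k\<in>{1..<\<mu>1}. sum_list (shiftpow \<delta> k p) \<ge> sum_list (shiftpow \<delta> k z)"
    unfolding S_set_def by auto
  define x where "x = (\<lambda>i. decr p ! i + \<delta>)"
  define y where "y = (\<lambda>i. decr z ! i + \<delta>)"
  have pos: "\<forall>i<n. x i > 0 \<and> y i > 0"
    proof (intro allI impI conjI)
    fix i assume "i < n"
    then have "decr p ! i \<in> set p" "decr z ! i \<in> set z" using decr_mem lp lz by auto
    then show "x i > 0" "y i > 0" using ps unfolding x_def y_def by force+
  qed
  have anti: "\<forall>i j. i \<le> j \<longrightarrow> j < n \<longrightarrow> x j \<le> x i \<and> y j \<le> y i"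
    unfolding x_def y_def using decr_anti[of _ _ p] decr_anti[of _ _ z] lp lz by simp
  have smono: "\<forall>a\<in>set w. \<forall>b\<in>set w. a < b \<longrightarrow> (a + \<delta>) ^ k < (b + \<delta>) ^ k"
    if "k \<ge> 1" "\<forall>a\<in>set w. \<delta> > - a" for w :: "real list" and k :: nat
    using that by (auto intro!: power_strict_mono)
  have dp: "decr (shiftpow \<delta> k p) = map (\<lambda>t. (t + \<delta>) ^ k) (decr p)" if "k \<ge> 1" for k
    unfolding shiftpow_def using smono[of k p] that ps by (intro decr_map) auto
  have dz: "decr (shiftpow \<delta> k z) = map (\<lambda>t. (t + \<delta>) ^ k) (decr z)" if "k \<ge> 1" for k
    unfolding shiftpow_def using smono[of k z] that ps by (intro decr_map) auto
  have sp: "sum_list (take j (decr (shiftpow \<delta> k p))) = (\<Sum>i<j. x i ^ k)" if "k \<ge> 1" "j \<le> n" for k j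
    using that lp by (simp add: dp sum_take x_def)
  have sz: "sum_list (take j (decr (shiftpow \<delta> k z))) = (\<Sum>i<j. y i ^ k)" if "k \<ge> 1" "j \<le> n" for k j
    using that lz by (simp add: dz sum_take y_def)
  have H: "\<forall>j\<le>n. (\<Sum>i<j. y i ^ \<mu>1) \<le> (\<Sum>i<j. x i ^ \<mu>1)"
  proof (intro allI impI)
    fix j assume j: "j \<le> n"
    show "(\<Sum>i<j. y i ^ \<mu>1) \<le> (\<Sum>i<j. x i ^ \<mu>1)"
    proof (cases "j = 0")
      case True then show ?thesis by simp
    next
      case False
      then have "j \<in> {1..length (shiftpow \<delta> \<mu>1 p)}" using j lp by (simp add: shiftpow_def)
      then have "sum_list (take j (decr (shiftpow \<delta> \<mu>1 z))) \<le> sum_list (take j (decr (shiftpow \<delta> \<mu>1 p)))"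
        using wm unfolding weak_maj_def by blast
      then show ?thesis using sp[of \<mu>1 j] sz[of \<mu>1 j] assms j by simp
    qed
  qed
  have C: "(\<Sum>i<j. y i ^ m) \<le> (\<Sum>i<j. x i ^ m)" if "m \<ge> \<mu>1" "j \<le> n" for m j
    using core[OF pos anti assms(1) that(1) H that(2)] .
  have W: "weak_maj (shiftpow \<delta> \<mu>2 p) (shiftpow \<delta> \<mu>2 z)"
    unfolding weak_maj_def
  proof (intro conjI ballI)
    show "length (shiftpow \<delta> \<mu>2 p) = length (shiftpow \<delta> \<mu>2 z)" using lp lz by (simp add: shiftpow_def)
  next
    fix j assume "j \<in> {1..length (shiftpow \<delta> \<mu>2 p)}"
    then have j: "j \<le> n" using lp by (simp add: shiftpow_def)
    show "sum_list (take j (decr (shiftpow \<delta> \<mu>2 p))) \<ge> sum_list (take j (decr (shiftpow \<delta> \<mu>2 z)))"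
      using sp[of \<mu>2 j] sz[of \<mu>2 j] C[of \<mu>2 j] j assms by auto
  qed
  have Sm: "\<forall>k\<in>{1..<\<mu>2}. sum_list (shiftpow \<delta> k p) \<ge> sum_list (shiftpow \<delta> k z)"
  proof
    fix k assume k: "k \<in> {1..<\<mu>2}"
    show "sum_list (shiftpow \<delta> k p) \<ge> sum_list (shiftpow \<delta> k z)"
    proof (cases "k < \<mu>1")
      case True then show ?thesis using sm k by auto
    next
      case False
      have "sum_list (shiftpow \<delta> k p) = sum_list (take n (decr (shiftpow \<delta> k p)))"
        using lp take_all[of "decr (shiftpow \<delta> k p)" n] sum_decr[of "shiftpow \<delta> k p"] by (simp add: shiftpow_def)
      moreover have "sum_list (shiftpow \<delta> k z) = sum_list (take n (decr (shiftpow \<delta> k z)))"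
        using lz take_all[of "decr (shiftpow \<delta> k z)" n] sum_decr[of "shiftpow \<delta> k z"] by (simp add: shiftpow_def)
      ultimately show ?thesis using sp[of k n] sz[of k n] C[of k n] k False by auto
    qed
  qed
  show "q \<in> S_set n \<delta> \<mu>2"
    unfolding q S_set_def using lp lz ps W Sm by auto
qed

end
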